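(* Under the hypotheses of Lemma 1 (real random variable $\hat g_i$ with mean $g_i\ne0$, variance $\sigma_i^2>0$, unimodal and symmetric distribution about $g_i$), one has $$\mathrm{Prob}(\mathrm{sign}\,\hat g_i=\mathrm{sign}\,g_i)\ge1-\frac12\cdot\frac{1}{1+z+z^2},\qquad z:=\frac{|g_i|}{\sqrt3\sigma_i}.$$
   Context: $\mathrm{sign}\,t=1,0,-1$ for $t>0,t=0,t<0$. *)

theory Defs
  imports "HOL-Probability.Probability"
begin

definition cdf_of :: "'a measure \<Rightarrow> ('a \<Rightarrow> real) \<Rightarrow> real \<Rightarrow> real" where
  "cdf_of M X x = measure M {\<omega> \<in> space M. X \<omega> \<le> x}"

text \<open>Unimodal (Khintchine): there is a mode m such that the distribution function is
  convex on the left of m and concave on the right of m.\<close>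
definition unimodal :: "'a measure \<Rightarrow> ('a \<Rightarrow> real) \<Rightarrow> bool" where
  "unimodal M X \<longleftrightarrow> (\<exists>m. convex_on {..<m} (cdf_of M X) \<and> concave_on {m<..} (cdf_of M X))"

definition symmetric_about :: "'a measure \<Rightarrow> ('a \<Rightarrow> real) \<Rightarrow> real \<Rightarrow> bool" where
  "symmetric_about M X c \<longleftrightarrow>
     distr M borel (\<lambda>\<omega>. X \<omega> - c) = distr M borel (\<lambda>\<omega>. c - X \<omega>)"

end

theory Submission
  imports Defs
begin


lemma poly_int:
  fixes F f :: "real \<Rightarrow> real"
  assumes "a \<le> b" "\<And>x. (F has_real_derivative f x) (at x)"
  shows "(f has_integral (F b - F a)) {a..b}"
  apply (rule fundamental_theorem_of_calculus[OF assms(1)])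
  using assms(2) by (simp add: has_real_derivative_iff_has_vector_derivative[symmetric] has_field_derivative_at_within)

lemma sq_int: assumes "0 \<le> (s::real)" shows "((\<lambda>t. 2*t) has_integral s\<^sup>2) {0..s}"
proof -
  have "\<And>x. ((\<lambda>t. t\<^sup>2) has_real_derivative 2*x) (at x)"
    by (rule derivative_eq_intros refl | simp)+
  from poly_int[of 0 s "\<lambda>t. t\<^sup>2" "\<lambda>t. 2*t", OF _ this] show ?thesis using assms by simp
qed

lemma sq_nn: "ennreal ((max s 0)\<^sup>2) = (\<integral>\<^sup>+t. ennreal (if 0 \<le> t \<and> t \<le> s then 2*t else 0) \<partial>lborel)"
proof (cases "0 \<le> s")
  case True
  have "(\<integral>\<^sup>+t. ennreal (indicator {0..s} t * (2*t)) \<partial>lborel) = ennreal (s\<^sup>2)"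
    by (rule nn_integral_has_integral_lebesgue[OF _ sq_int[OF True]]) auto
  moreover have "(\<lambda>t. ennreal (indicator {0..s} t * (2*t))) = (\<lambda>t. ennreal (if 0 \<le> t \<and> t \<le> s then 2*t else 0))"
    by (auto simp: indicator_def)
  ultimately show ?thesis using True by simp
next
  case False
  then have "(\<lambda>t. ennreal (if 0 \<le> t \<and> t \<le> s then 2*t else 0)) = (\<lambda>t. 0)" by (auto simp: fun_eq_iff)
  then show ?thesis using False by simp
qed

lemma core:
  fixes M :: "'a measure" and Y :: "'a \<Rightarrow> real" and k q \<sigma> :: real
  assumes P: "prob_space M" and Ym[measurable]: "Y \<in> borel_measurable M"
    and k: "0 < k" and q: "0 \<le> q" "q < 1/2"
    and bnd: "\<And>t. 0 \<le> t \<Longrightarrow> t \<le> k/(1-2*q) \<Longrightarrow>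
       (if t \<le> k then q else 1/2 - (1-2*q)*t/(2*k)) \<le> measure M {\<omega>\<in>space M. t \<le> Y \<omega>}"
    and E: "(\<integral>\<^sup>+\<omega>. ennreal ((max (Y \<omega>) 0)\<^sup>2) \<partial>M) \<le> ennreal (\<sigma>\<^sup>2/2)"
  shows "k\<^sup>2*(1-(1-2*q)^3) \<le> 3*\<sigma>\<^sup>2*(1-2*q)\<^sup>2"
proof -
  interpret prob_space M by (rule P)
  interpret pair_sigma_finite M lborel by unfold_locales
  define v where "v = 1-2*q"
  have v: "0 < v" "v \<le> 1" using q by (auto simp: v_def)
  define t0 where "t0 = k/v"
  have kt0: "k \<le> t0" using v k by (auto simp: t0_def field_simps)
  define ell where "ell t = (if t \<le> k then q else (1/2 - (v * t)/(2*k)))" for t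
  define V where "V = k\<^sup>2*(1/v\<^sup>2 - v)/6"
  have p1: "((\<lambda>t. 2*t*ell t) has_integral (q*k\<^sup>2 - q*0\<^sup>2)) {0..k}"
  proof -
    have "\<And>x. ((\<lambda>t. q*t\<^sup>2) has_real_derivative 2*q*x) (at x)"
      by (rule derivative_eq_intros refl | simp)+
    from poly_int[of 0 k "\<lambda>t. q*t\<^sup>2" "\<lambda>t. 2*q*t", OF _ this]
    have "((\<lambda>t. 2*q*t) has_integral (q*k\<^sup>2 - q*0\<^sup>2)) {0..k}" using k by simp
    then show ?thesis
      by (subst has_integral_cong[where g="\<lambda>t. 2*q*t"]) (auto simp: ell_def)
  qed
  define c where "c = v/(3*k)"
  have p2: "((\<lambda>t. 2*t*ell t) has_integral ((t0\<^sup>2/2 - c*t0^3) - (k\<^sup>2/2 - c*k^3))) {k..t0}"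
  proof -
    have "\<And>x. ((\<lambda>t. t\<^sup>2/2 - c*t^3) has_real_derivative (x - 3*c*x\<^sup>2)) (at x)"
      by (auto intro!: derivative_eq_intros simp: power2_eq_square)
    from poly_int[of k t0 _ "\<lambda>x. x - 3*c*x\<^sup>2", OF kt0 this]
    have "((\<lambda>x. x - 3*c*x\<^sup>2) has_integral ((t0\<^sup>2/2 - c*t0^3) - (k\<^sup>2/2 - c*k^3))) {k..t0}" .
    moreover have "\<And>x. x \<in> {k..t0} \<Longrightarrow> 2*x*ell x = x - 3*c*x\<^sup>2"
      using k by (auto simp: ell_def v_def c_def field_simps power2_eq_square)
    ultimately show ?thesis by (subst has_integral_cong) auto
  qed
  have Vint: "((\<lambda>t. 2*t*ell t) has_integral V) {0..t0}"
  proof -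
    have "((\<lambda>t. 2*t*ell t) has_integral ((q*k\<^sup>2 - q*0\<^sup>2) + ((t0\<^sup>2/2 - c*t0^3) - (k\<^sup>2/2 - c*k^3)))) {0..t0}"
      by (rule has_integral_combine[OF _ kt0 p1 p2]) (use k in auto)
    moreover have "(q*k\<^sup>2 - q*0\<^sup>2) + ((t0\<^sup>2/2 - c*t0^3) - (k\<^sup>2/2 - c*k^3)) = V"
    proof -
      have qv: "q = (1-v)/2" by (simp add: v_def)
      show ?thesis
        unfolding V_def t0_def c_def qv using v k by (simp add: field_simps power2_eq_square power3_eq_cube)
    qed
    ultimately show ?thesis by simp
  qed
  have lnn: "\<And>t. t \<in> {0..t0} \<Longrightarrow> 0 \<le> 2*t*ell t"
  proof -
    fix t assume t: "t \<in> {0..t0}"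
    have "0 \<le> ell t"
    proof (cases "t \<le> k")
      case False
      have "v * t \<le> k" using t v by (auto simp: t0_def field_simps)
      then show ?thesis using False k by (auto simp: ell_def field_simps)
    qed (use q in \<open>auto simp: ell_def\<close>)
    then show "0 \<le> 2*t*ell t" using t by auto
  qed
  have VN: "(\<integral>\<^sup>+t. ennreal (indicator {0..t0} t * (2*t*ell t)) \<partial>lborel) = ennreal V"
    by (rule nn_integral_has_integral_lebesgue[OF lnn Vint])
  have inner: "ennreal (indicator {0..t0} t * (2*t*ell t)) \<le>
      (\<integral>\<^sup>+\<omega>. ennreal (if 0 \<le> t \<and> t \<le> Y \<omega> then 2*t else 0) \<partial>M)" for t
  proof (cases "t \<in> {0..t0}")
    case True
    have "(\<integral>\<^sup>+\<omega>. ennreal (if 0 \<le> t \<and> t \<le> Y \<omega> then 2*t else 0) \<partial>M)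
        = (\<integral>\<^sup>+\<omega>. ennreal (2*t) * indicator {\<omega>\<in>space M. t \<le> Y \<omega>} \<omega> \<partial>M)"
      using True by (intro nn_integral_cong) (auto simp: indicator_def)
    also have "\<dots> = ennreal (2*t) * emeasure M {\<omega>\<in>space M. t \<le> Y \<omega>}"
      by (rule nn_integral_cmult_indicator) measurable
    also have "\<dots> = ennreal (2*t) * ennreal (measure M {\<omega>\<in>space M. t \<le> Y \<omega>})"
      by (simp add: emeasure_eq_measure)
    finally have eq: "(\<integral>\<^sup>+\<omega>. ennreal (if 0 \<le> t \<and> t \<le> Y \<omega> then 2*t else 0) \<partial>M) = 
       ennreal (2*t) * ennreal (measure M {\<omega>\<in>space M. t \<le> Y \<omega>})" .
    have "ell t \<le> measure M {\<omega>\<in>space M. t \<le> Y \<omega>}"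
      using bnd[of t] True by (auto simp: ell_def v_def t0_def)
    moreover have "0 \<le> ell t" using lnn[OF True] True
      by (cases "t = 0") (auto simp: ell_def zero_le_mult_iff q)
    ultimately have "ennreal (2*t*ell t) \<le> ennreal (2*t) * ennreal (measure M {\<omega>\<in>space M. t \<le> Y \<omega>})"
      using True by (simp add: ennreal_mult[symmetric] mult_left_mono)
    then show ?thesis using True eq by simp
  qed simp
  have "ennreal V \<le> (\<integral>\<^sup>+t. (\<integral>\<^sup>+\<omega>. ennreal (if 0 \<le> t \<and> t \<le> Y \<omega> then 2*t else 0) \<partial>M) \<partial>lborel)"
    unfolding VN[symmetric] by (rule nn_integral_mono) (rule inner)
  also have "\<dots> = (\<integral>\<^sup>+\<omega>. (\<integral>\<^sup>+t. ennreal (if 0 \<le> t \<and> t \<le> Y \<omega> then 2*t else 0) \<partial>lborel) \<partial>M)"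
    by (rule Fubini[where f="\<lambda>(\<omega>,t). ennreal (if 0 \<le> t \<and> t \<le> Y \<omega> then 2*t else 0)", simplified]) measurable
  also have "\<dots> = (\<integral>\<^sup>+\<omega>. ennreal ((max (Y \<omega>) 0)\<^sup>2) \<partial>M)"
    by (simp add: sq_nn)
  also have "\<dots> \<le> ennreal (\<sigma>\<^sup>2/2)" by (rule E)
  finally have "V \<le> \<sigma>\<^sup>2/2" by simp
  then have "k\<^sup>2 * (1/v\<^sup>2 - v) \<le> 3 * \<sigma>\<^sup>2" by (simp add: V_def)
  then have "k\<^sup>2 * (1/v\<^sup>2 - v)  *  v\<^sup>2 \<le> 3 * \<sigma>\<^sup>2  *  v\<^sup>2" using v by (intro mult_right_mono) auto
  moreover have "k\<^sup>2 * (1-v^3) = k\<^sup>2 * (1/v\<^sup>2 - v)  *  v\<^sup>2"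
    using v by (simp add: field_simps power2_eq_square power3_eq_cube)
  ultimately have "k\<^sup>2 * (1-v^3) \<le> 3 * \<sigma>\<^sup>2 * v\<^sup>2" by linarith
  then show ?thesis by (simp add: v_def)
qed

lemma chord:
  fixes \<phi> :: "real \<Rightarrow> real"
  assumes cv: "convex_on {0<..} \<phi>" and b: "\<And>t. 0 < t \<Longrightarrow> 0 \<le> \<phi> t \<and> \<phi> t \<le> 1/2"
    and kt: "0 < k" "k < t"
  shows "t * \<phi> k - (t - k)/2 \<le> k * \<phi> t"
proof -
  have key: "t * \<phi> k - (t - k)/2 - k * \<phi> t \<le> e/2" if e: "0 < e" "e < k" for e
  proof -
    define u where "u = (t-k)/(t-e)"
    define w where "w = (k-e)/(t-e)"
    have ne: "t - e \<noteq> 0" using e kt by simp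
    have uw: "0 \<le> u" "0 \<le> w" using e kt by (auto simp: u_def w_def)
    have uw3: "u + w = 1" unfolding u_def w_def add_divide_distrib[symmetric] using ne by simp
    have "u * e + w * t = ((t-k)*e + (k-e)*t)/(t-e)" unfolding u_def w_def add_divide_distrib times_divide_eq_left by simp
    also have "(t-k)*e + (k-e)*t = k*(t-e)" by (simp add: algebra_simps)
    finally have pt: "u *\<^sub>R e + w *\<^sub>R t = k" using ne by simp
    have "\<phi> k \<le> u * \<phi> e + w * \<phi> t"
      using cv e kt uw uw3 unfolding convex_on_def pt[symmetric] by auto
    also have "u * \<phi> e \<le> u * (1/2)" using b[of e] e uw by (intro mult_left_mono) auto
    then have "u * \<phi> e + w * \<phi> t \<le> u * (1/2) + w * \<phi> t" by linarith
    finally have "(t-e) * \<phi> k \<le> (t-e) * (u * (1/2) + w * \<phi> t)" using e kt by (auto intro: mult_left_mono)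
    also have "\<dots> = ((t-e)*u)/2 + ((t-e)*w) * \<phi> t" by (simp add: algebra_simps)
    also have "(t-e)*u = t-k" using ne by (simp add: u_def)
    also have "(t-e)*w = k-e" using ne by (simp add: w_def)
    finally have "(t-e) * \<phi> k \<le> (t-k)/2 + (k-e) * \<phi> t" .
    moreover have "\<phi> k \<le> 1/2" "0 \<le> \<phi> t" using b kt by auto
    ultimately have h1: "e * \<phi> k \<le> e * (1/2)" "0 \<le> e * \<phi> t" using e by (auto intro: mult_left_mono)
    have "(t-e) * \<phi> k = t * \<phi> k - e * \<phi> k" "(k-e) * \<phi> t = k * \<phi> t - e * \<phi> t" by (auto simp: algebra_simps)
    with \<open>(t-e) * \<phi> k \<le> (t-k)/2 + (k-e) * \<phi> t\<close> h1 show ?thesis by linarith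
  qed
  show ?thesis
  proof (rule ccontr)
    assume "\<not> ?thesis"
    then have A: "0 < t * \<phi> k - (t - k)/2 - k * \<phi> t" by simp
    define e where "e = min (t * \<phi> k - (t - k)/2 - k * \<phi> t) (k/2)"
    have "0 < e" "e < k" using A kt by (auto simp: e_def)
    have "e \<le> t * \<phi> k - (t - k)/2 - k * \<phi> t" by (simp add: e_def)
    with key[OF \<open>0 < e\<close> \<open>e < k\<close>] A show False by linarith
  qed
qed

lemma lim1:
  fixes a b k :: real
  assumes k: "0 < k" and h: "\<And>x. 0 < x \<Longrightarrow> x < k \<Longrightarrow> x\<^sup>2 * a \<le> b"
  shows "k\<^sup>2 * a \<le> b"
proof (rule tendsto_upperbound[of "\<lambda>x. x\<^sup>2 * a" _ "at_left k"])
  show "((\<lambda>x. x\<^sup>2 * a) \<longlongrightarrow> k\<^sup>2 * a) (at_left k)"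
    by (intro tendsto_intros)
  show "\<forall>\<^sub>F x in at_left k. x\<^sup>2 * a \<le> b"
    using eventually_at_left_real[OF k] by eventually_elim (use h in auto)
  show "at_left k \<noteq> bot" by simp
qed

lemma lim2:
  fixes c d :: real
  assumes c: "0 < c" and h: "\<And>w. 0 < w \<Longrightarrow> w \<le> 1 \<Longrightarrow> c * (1 - w^3) \<le> d * w\<^sup>2"
  shows False
proof -
  have "c * (1 - 0^3) - d * 0\<^sup>2 \<le> 0"
  proof (rule tendsto_upperbound[of "\<lambda>w. c * (1 - w^3) - d * w\<^sup>2" _ "at_right 0"])
    show "((\<lambda>w. c * (1 - w^3) - d * w\<^sup>2) \<longlongrightarrow> c * (1 - 0^3) - d * 0\<^sup>2) (at_right 0)"
      by (intro tendsto_intros)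
    show "\<forall>\<^sub>F x in at_right 0. c * (1 - x^3) - d * x\<^sup>2 \<le> 0"
      using eventually_at_right_real[OF zero_less_one] by eventually_elim (use h in auto)
    show "at_right (0::real) \<noteq> bot" by simp
  qed
  then show False using c by simp
qed

lemma reduce:
  fixes M :: "'a measure" and Y :: "'a \<Rightarrow> real" and k q \<sigma> :: real and \<phi> :: "real \<Rightarrow> real"
  assumes P: "prob_space M" and Ym[measurable]: "Y \<in> borel_measurable M" and k: "0 < k"
    and cv: "convex_on {0<..} \<phi>" and b: "\<And>t. 0 < t \<Longrightarrow> 0 \<le> \<phi> t \<and> \<phi> t \<le> 1/2"
    and r1: "\<And>t. 0 < t \<Longrightarrow> \<phi> t \<le> measure M {\<omega>\<in>space M. t \<le> Y \<omega>}"
    and r2: "\<And>s t. 0 < s \<Longrightarrow> s < t \<Longrightarrow> measure M {\<omega>\<in>space M. t \<le> Y \<omega>} \<le> \<phi> s"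
    and E: "(\<integral>\<^sup>+\<omega>. ennreal ((max (Y \<omega>) 0)\<^sup>2) \<partial>M) \<le> ennreal (\<sigma>\<^sup>2/2)"
    and qd: "q = measure M {\<omega>\<in>space M. k \<le> Y \<omega>}"
  shows "k\<^sup>2*(1-(1-2*q)^3) \<le> 3*\<sigma>\<^sup>2*(1-2*q)\<^sup>2"
proof -
  interpret prob_space M by (rule P)
  have mono: "measure M {\<omega>\<in>space M. b \<le> Y \<omega>} \<le> measure M {\<omega>\<in>space M. a \<le> Y \<omega>}" if "a \<le> b" for a b
    using that by (intro finite_measure_mono) auto
  have q0: "0 \<le> q" by (simp add: qd)
  have qh: "q \<le> 1/2" using r2[of "k/2" k] b[of "k/2"] k qd by auto
  have C: "k'\<^sup>2*(1-(1-2*q1)^3) \<le> 3*\<sigma>\<^sup>2*(1-2*q1)\<^sup>2"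
    if k': "0 < k'" "k' < k" and q1: "0 \<le> q1" "q1 \<le> q" "q1 < 1/2" for k' q1
  proof (rule core[OF P Ym k'(1) q1(1) q1(3) _ E])
    fix t assume t: "0 \<le> t" "t \<le> k'/(1-2*q1)"
    have qk: "q \<le> \<phi> k'" using r2[OF k'] qd by simp
    show "(if t \<le> k' then q1 else 1/2 - (1-2*q1)*t/(2*k')) \<le> measure M {\<omega>\<in>space M. t \<le> Y \<omega>}"
    proof (cases "t \<le> k'")
      case True
      then show ?thesis using q1 qk r1[OF k'(1)] mono[OF True] by simp
    next
      case False
      have ch: "t * \<phi> k' - (t - k')/2 \<le> k' * \<phi> t"
        by (rule chord[OF cv b k'(1)]) (use False in auto)
      have "1/2 - (1-2*q1)*t/(2*k') = (t * q1 - (t - k')/2) / k'" using k' by (simp add: field_simps)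
      also have "\<dots> \<le> (t * \<phi> k' - (t - k')/2) / k'"
        using k' t q1 qk by (intro divide_right_mono) (auto intro: mult_left_mono)
      also have "\<dots> \<le> \<phi> t" using ch k' by (simp add: divide_le_eq mult.commute)
      also have "\<dots> \<le> measure M {\<omega>\<in>space M. t \<le> Y \<omega>}" using r1[of t] False k' by simp
      finally show ?thesis using False by simp
    qed
  qed
  show ?thesis
  proof (cases "q < 1/2")
    case True
    have "k\<^sup>2 * (1-(1-2*q)^3) \<le> 3*\<sigma>\<^sup>2*(1-2*q)\<^sup>2"
      by (rule lim1[OF k]) (use C[of _ q] True q0 in auto)
    then show ?thesis by simp
  next
    case False
    then have qq: "q = 1/2" using qh by simp
    have "False"
    proof (rule lim2[of "(k/2)\<^sup>2" "3*\<sigma>\<^sup>2"])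
      show "0 < (k/2)\<^sup>2" using k by simp
      fix w :: real assume w: "0 < w" "w \<le> 1"
      have "(k/2)\<^sup>2*(1-(1-2*((1-w)/2))^3) \<le> 3*\<sigma>\<^sup>2*(1-2*((1-w)/2))\<^sup>2"
        by (rule C) (use k w qq in auto)
      moreover have e: "1-2*((1-w)/2) = w" by (simp add: field_simps)
      ultimately show "(k/2)\<^sup>2 * (1 - w^3) \<le> 3*\<sigma>\<^sup>2 * w\<^sup>2" by (simp only: e)
    qed
    then show ?thesis ..
  qed
qed


lemma final_alg:
  fixes v z :: real
  assumes v: "0 \<le> v" "v \<le> 1" and z: "0 \<le> z" and h: "z\<^sup>2 * (1 - v^3) \<le> v\<^sup>2"
  shows "(1 - v) * (1 + z + z\<^sup>2) \<le> 1"
proof -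
  define c where "c = 1 - v^3"
  have v3: "v^3 \<le> 1" using v by (simp add: power_le_one)
  have c: "0 \<le> c" "c \<le> 1" using v3 v by (auto simp: c_def)
  have h': "z\<^sup>2 * c \<le> v\<^sup>2" using h by (simp add: c_def)
  have "(z * c)\<^sup>2 = (z\<^sup>2 * c) * c" by (simp add: power2_eq_square)
  also have "\<dots> \<le> v\<^sup>2 * c" using h' c by (intro mult_right_mono) auto
  also have "\<dots> \<le> v\<^sup>2 * 1" using c by (intro mult_left_mono) auto
  also have "\<dots> \<le> v\<^sup>2 * (1 + v\<^sup>2)\<^sup>2"
  proof -
    have "1 \<le> (1 + v\<^sup>2)\<^sup>2" using mult_mono[of 1 "1+v\<^sup>2" 1 "1+v\<^sup>2"] by (simp add: power2_eq_square)
    then show ?thesis by (intro mult_left_mono) auto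
  qed
  also have "\<dots> = (v * (1 + v\<^sup>2))\<^sup>2" by (simp add: power_mult_distrib)
  finally have s: "(z * c)\<^sup>2 \<le> (v * (1 + v\<^sup>2))\<^sup>2" .
  have zc: "z * c \<le> v * (1 + v\<^sup>2)"
    by (rule power2_le_imp_le[OF s]) (use v in auto)
  have c_eq: "c = (1 - v) * (1 + v + v\<^sup>2)" by (simp add: c_def power2_eq_square power3_eq_cube algebra_simps)
  have r_eq: "v * (1 + v\<^sup>2) + v\<^sup>2 = v * (1 + v + v\<^sup>2)" by (simp add: power2_eq_square algebra_simps)
  have "c * (z + z\<^sup>2) = z * c + z\<^sup>2 * c" by (simp add: algebra_simps)
  also have "\<dots> \<le> v * (1 + v\<^sup>2) + v\<^sup>2" using zc h' by linarith
  finally have "((1 - v) * (z + z\<^sup>2)) * (1 + v + v\<^sup>2) \<le> v * (1 + v + v\<^sup>2)"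
    unfolding r_eq c_eq by (simp add: mult.commute mult.left_commute)
  moreover have "0 < 1 + v + v\<^sup>2" using v by (simp add: add_pos_nonneg)
  ultimately have "(1 - v) * (z + z\<^sup>2) \<le> v" by (simp add: mult_le_cancel_right)
  then show ?thesis by (simp add: algebra_simps)
qed

theorem mainTheorem8:
  fixes M :: "'a measure" and X :: "'a \<Rightarrow> real" and g \<sigma> :: real
  assumes "prob_space M"
    and "X \<in> borel_measurable M"
    and "integrable M X" and "integrable M (\<lambda>\<omega>. (X \<omega>)\<^sup>2)"
    and "prob_space.expectation M X = g" and "g \<noteq> 0"
    and "\<sigma> > 0" and "prob_space.variance M X = \<sigma>\<^sup>2"
    and "unimodal M X" and "symmetric_about M X g"
  shows "prob_space.prob M {\<omega> \<in> space M. sgn (X \<omega>) = sgn g}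
           \<ge> 1 - 1/2 * (1 / (1 + \<bar>g\<bar> / (sqrt 3 * \<sigma>) + (\<bar>g\<bar> / (sqrt 3 * \<sigma>))\<^sup>2))"
proof -
  note P = assms(1)
  interpret prob_space M by (rule P)
  note Xm[measurable] = assms(2)
  define Y where "Y \<omega> = X \<omega> - g" for \<omega>
  have Ym[measurable]: "Y \<in> borel_measurable M" unfolding Y_def by measurable
  define k where "k = \<bar>g\<bar>"
  have k: "0 < k" using assms(6) by (simp add: k_def)
  have symd: "distr M borel (\<lambda>\<omega>. X \<omega> - g) = distr M borel (\<lambda>\<omega>. g - X \<omega>)"
    using assms(10) by (simp add: symmetric_about_def)
  have symP: "measure M {\<omega>\<in>space M. Y \<omega> \<in> A} = measure M {\<omega>\<in>space M. - Y \<omega> \<in> A}"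
    if A: "A \<in> sets borel" for A
  proof -
    have "measure M {\<omega>\<in>space M. Y \<omega> \<in> A} = measure (distr M borel (\<lambda>\<omega>. X \<omega> - g)) A"
      using A by (subst measure_distr) (auto simp: Y_def vimage_def Int_def conj_commute)
    also have "\<dots> = measure (distr M borel (\<lambda>\<omega>. g - X \<omega>)) A" by (simp only: symd)
    also have "\<dots> = measure M {\<omega>\<in>space M. - Y \<omega> \<in> A}"
      using A by (subst measure_distr) (auto simp: Y_def vimage_def Int_def conj_commute)
    finally show ?thesis .
  qed
  have symI: "integral\<^sup>L M (\<lambda>\<omega>. f (Y \<omega>)) = integral\<^sup>L M (\<lambda>\<omega>. f (- Y \<omega>))"
    if f: "f \<in> borel_measurable borel" for f :: "real \<Rightarrow> real"
  proof -
    have "integral\<^sup>L M (\<lambda>\<omega>. f (Y \<omega>)) = integral\<^sup>L (distr M borel (\<lambda>\<omega>. X \<omega> - g)) f"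
      using f by (subst integral_distr) (auto simp: Y_def)
    also have "\<dots> = integral\<^sup>L (distr M borel (\<lambda>\<omega>. g - X \<omega>)) f" by (simp only: symd)
    also have "\<dots> = integral\<^sup>L M (\<lambda>\<omega>. f (- Y \<omega>))"
      using f by (subst integral_distr) (auto simp: Y_def)
    finally show ?thesis .
  qed
  define Pge where "Pge t = measure M {\<omega>\<in>space M. t \<le> Y \<omega>}" for t
  define Pgt where "Pgt t = measure M {\<omega>\<in>space M. t < Y \<omega>}" for t
  have Pge_mono: "Pge b \<le> Pge a" if "a \<le> b" for a b
    unfolding Pge_def using that by (intro finite_measure_mono) auto
  have Pgt_mono: "Pgt b \<le> Pgt a" if "a \<le> b" for a b
    unfolding Pgt_def using that by (intro finite_measure_mono) auto
  have Pgt_ge: "Pgt b \<le> Pge a" if "a \<le> b" for a b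
    unfolding Pgt_def Pge_def using that by (intro finite_measure_mono) auto
  have Pge_gt: "Pge b \<le> Pgt a" if "a < b" for a b
    unfolding Pgt_def Pge_def using that by (intro finite_measure_mono) auto
  have half: "Pgt 0 \<le> 1/2"
  proof -
    have "Pgt 0 = measure M {\<omega>\<in>space M. Y \<omega> \<in> {0<..}}" by (simp add: Pgt_def)
    also have "\<dots> = measure M {\<omega>\<in>space M. - Y \<omega> \<in> {0<..}}" by (rule symP) simp
    also have "\<dots> \<le> measure M {\<omega>\<in>space M. Y \<omega> \<le> 0}" by (intro finite_measure_mono) auto
    also have "{\<omega>\<in>space M. Y \<omega> \<le> 0} = space M - {\<omega>\<in>space M. 0 < Y \<omega>}" by auto
    also have "measure M \<dots> = 1 - Pgt 0" unfolding Pgt_def by (rule prob_compl) measurable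
    finally show ?thesis by simp
  qed
  have cdfP: "cdf_of M X (g - t) = Pge t" for t
  proof -
    have "cdf_of M X (g - t) = measure M {\<omega>\<in>space M. - Y \<omega> \<in> {t..}}"
      unfolding cdf_of_def by (intro arg_cong[where f="measure M"]) (auto simp: Y_def)
    also have "\<dots> = Pge t" unfolding Pge_def by (subst symP[symmetric]) auto
    finally show ?thesis .
  qed
  have cdfQ: "1 - cdf_of M X (g + t) = Pgt t" for t
  proof -
    have "{\<omega>\<in>space M. t < Y \<omega>} = space M - {\<omega>\<in>space M. X \<omega> \<le> g + t}" by (auto simp: Y_def)
    then have "Pgt t = 1 - measure M {\<omega>\<in>space M. X \<omega> \<le> g + t}"
      unfolding Pgt_def by (simp add: prob_compl)
    then show ?thesis by (simp add: cdf_of_def)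
  qed
  have intY2: "integrable M (\<lambda>\<omega>. (Y \<omega>)\<^sup>2)"
  proof -
    have "integrable M (\<lambda>\<omega>. (X \<omega>)\<^sup>2 - 2 * g * X \<omega> + g\<^sup>2)"
      using assms(3,4) by auto
    moreover have "(\<lambda>\<omega>. (Y \<omega>)\<^sup>2) = (\<lambda>\<omega>. (X \<omega>)\<^sup>2 - 2 * g * X \<omega> + g\<^sup>2)"
      by (auto simp: Y_def fun_eq_iff power2_eq_square algebra_simps)
    ultimately show ?thesis by simp
  qed
  have var: "integral\<^sup>L M (\<lambda>\<omega>. (Y \<omega>)\<^sup>2) = \<sigma>\<^sup>2"
    using assms(5,8) by (simp add: Y_def)
  have intP: "integrable M (\<lambda>\<omega>. (max (Y \<omega>) 0)\<^sup>2)"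
    by (rule Bochner_Integration.integrable_bound[OF intY2]) (auto simp: max_def)
  have intN: "integrable M (\<lambda>\<omega>. (max (- Y \<omega>) 0)\<^sup>2)"
    by (rule Bochner_Integration.integrable_bound[OF intY2]) (auto simp: max_def)
  have eqPN: "integral\<^sup>L M (\<lambda>\<omega>. (max (Y \<omega>) 0)\<^sup>2) = integral\<^sup>L M (\<lambda>\<omega>. (max (- Y \<omega>) 0)\<^sup>2)"
    by (rule symI[of "\<lambda>y. (max y 0)\<^sup>2", simplified]) measurable
  have "integral\<^sup>L M (\<lambda>\<omega>. (Y \<omega>)\<^sup>2) = integral\<^sup>L M (\<lambda>\<omega>. (max (Y \<omega>) 0)\<^sup>2 + (max (- Y \<omega>) 0)\<^sup>2)"
    by (intro arg_cong[where f="integral\<^sup>L M"]) (auto simp: fun_eq_iff max_def)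
  also have "\<dots> = integral\<^sup>L M (\<lambda>\<omega>. (max (Y \<omega>) 0)\<^sup>2) + integral\<^sup>L M (\<lambda>\<omega>. (max (- Y \<omega>) 0)\<^sup>2)"
    by (rule Bochner_Integration.integral_add[OF intP intN])
  finally have half2: "integral\<^sup>L M (\<lambda>\<omega>. (max (Y \<omega>) 0)\<^sup>2) = \<sigma>\<^sup>2/2" using var eqPN by simp
  have E: "(\<integral>\<^sup>+\<omega>. ennreal ((max (Y \<omega>) 0)\<^sup>2) \<partial>M) \<le> ennreal (\<sigma>\<^sup>2/2)"
    using nn_integral_eq_integral[OF intP] half2 by simp
  define q where "q = Pge k"
  have fail: "measure M {\<omega>\<in>space M. sgn (X \<omega>) = sgn g} = 1 - q"
  proof -
    have "{\<omega>\<in>space M. sgn (X \<omega>) = sgn g} = space M - {\<omega>\<in>space M. sgn (X \<omega>) \<noteq> sgn g}" by auto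
    then have "measure M {\<omega>\<in>space M. sgn (X \<omega>) = sgn g} = 1 - measure M {\<omega>\<in>space M. sgn (X \<omega>) \<noteq> sgn g}"
      by (simp add: prob_compl)
    moreover have "measure M {\<omega>\<in>space M. sgn (X \<omega>) \<noteq> sgn g} = q"
    proof (cases "g > 0")
      case True
      have "measure M {\<omega>\<in>space M. sgn (X \<omega>) \<noteq> sgn g} = measure M {\<omega>\<in>space M. Y \<omega> \<in> {..-k}}"
        using True by (intro arg_cong[where f="measure M"]) (auto simp: Y_def k_def sgn_if)
      also have "\<dots> = measure M {\<omega>\<in>space M. - Y \<omega> \<in> {..-k}}" by (rule symP) simp
      also have "\<dots> = q" unfolding q_def Pge_def by (intro arg_cong[where f="measure M"]) auto
      finally show ?thesis .
    next
      case False
      then have "g < 0" using assms(6) by simp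
      then show ?thesis unfolding q_def Pge_def
        by (intro arg_cong[where f="measure M"]) (auto simp: Y_def k_def sgn_if)
    qed
    ultimately show ?thesis by simp
  qed
  have q01: "0 \<le> q" "q \<le> 1/2"
    using Pge_gt[of 0 k] half k by (auto simp: q_def Pge_def)
  have main: "k\<^sup>2*(1-(1-2*q)^3) \<le> 3*\<sigma>\<^sup>2*(1-2*q)\<^sup>2"
  proof -
    obtain m where cvx: "convex_on {..<m} (cdf_of M X)" and ccv: "concave_on {m<..} (cdf_of M X)"
      using assms(9) by (auto simp: unimodal_def)
    show ?thesis
    proof (cases "g \<le> m")
      case True
      show ?thesis
      proof (rule reduce[OF P Ym k, where \<phi>="\<lambda>t. cdf_of M X (g - t)"])
        show "convex_on {0<..} (\<lambda>t. cdf_of M X (g - t))"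
          unfolding convex_on_def
        proof (intro conjI ballI allI impI)
          show "convex {0::real<..}" by simp
          fix x y :: real and u v :: real
          assume xy: "x \<in> {0<..}" "y \<in> {0<..}" and uv: "0 \<le> u" "0 \<le> v" "u + v = 1"
          have "u *\<^sub>R (g - x) + v *\<^sub>R (g - y) = (u + v) * g - (u *\<^sub>R x + v *\<^sub>R y)"
            by (simp add: algebra_simps)
          then have "g - (u *\<^sub>R x + v *\<^sub>R y) = u *\<^sub>R (g - x) + v *\<^sub>R (g - y)"
            using uv by simp
          moreover have "g - x \<in> {..<m}" "g - y \<in> {..<m}" using xy True by auto
          ultimately show "cdf_of M X (g - (u *\<^sub>R x + v *\<^sub>R y)) \<le> u * cdf_of M X (g - x) + v * cdf_of M X (g - y)"
            using cvx uv unfolding convex_on_def by auto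
        qed
        show "0 \<le> cdf_of M X (g - t) \<and> cdf_of M X (g - t) \<le> 1/2" if "0 < t" for t
          using cdfP[of t] Pge_gt[of 0 t] half that by (auto simp: Pge_def)
        show "cdf_of M X (g - t) \<le> measure M {\<omega>\<in>space M. t \<le> Y \<omega>}" if "0 < t" for t
          using cdfP[of t] by (simp add: Pge_def)
        show "measure M {\<omega>\<in>space M. t \<le> Y \<omega>} \<le> cdf_of M X (g - s)" if "0 < s" "s < t" for s t
          using cdfP[of s] Pge_mono[of s t] that by (simp add: Pge_def)
        show "(\<integral>\<^sup>+\<omega>. ennreal ((max (Y \<omega>) 0)\<^sup>2) \<partial>M) \<le> ennreal (\<sigma>\<^sup>2/2)" by (rule E)
        show "q = measure M {\<omega>\<in>space M. k \<le> Y \<omega>}" by (simp add: q_def Pge_def)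
      qed
    next
      case False
      show ?thesis
      proof (rule reduce[OF P Ym k, where \<phi>="\<lambda>t. 1 - cdf_of M X (g + t)"])
        show "convex_on {0<..} (\<lambda>t. 1 - cdf_of M X (g + t))"
          unfolding convex_on_def
        proof (intro conjI ballI allI impI)
          show "convex {0::real<..}" by simp
          fix x y :: real and u v :: real
          assume xy: "x \<in> {0<..}" "y \<in> {0<..}" and uv: "0 \<le> u" "0 \<le> v" "u + v = 1"
          have "u *\<^sub>R (g + x) + v *\<^sub>R (g + y) = (u + v) * g + (u *\<^sub>R x + v *\<^sub>R y)"
            by (simp add: algebra_simps)
          then have "g + (u *\<^sub>R x + v *\<^sub>R y) = u *\<^sub>R (g + x) + v *\<^sub>R (g + y)"
            using uv by simp
          moreover have "g + x \<in> {m<..}" "g + y \<in> {m<..}" using xy False by auto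
          ultimately have "- cdf_of M X (g + (u *\<^sub>R x + v *\<^sub>R y)) \<le> u * (- cdf_of M X (g + x)) + v * (- cdf_of M X (g + y))"
            using ccv uv unfolding concave_on_def convex_on_def by auto
          then show "1 - cdf_of M X (g + (u *\<^sub>R x + v *\<^sub>R y)) \<le> u * (1 - cdf_of M X (g + x)) + v * (1 - cdf_of M X (g + y))"
            using uv by (simp add: algebra_simps)
        qed
        show "0 \<le> 1 - cdf_of M X (g + t) \<and> 1 - cdf_of M X (g + t) \<le> 1/2" if "0 < t" for t
          using cdfQ[of t] Pgt_mono[of 0 t] half that by (auto simp: Pgt_def)
        show "1 - cdf_of M X (g + t) \<le> measure M {\<omega>\<in>space M. t \<le> Y \<omega>}" if "0 < t" for t
          using cdfQ[of t] Pgt_ge[of t t] by (simp add: Pge_def)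
        show "measure M {\<omega>\<in>space M. t \<le> Y \<omega>} \<le> 1 - cdf_of M X (g + s)" if "0 < s" "s < t" for s t
          using cdfQ[of s] Pge_gt[of s t] that by (simp add: Pge_def)
        show "(\<integral>\<^sup>+\<omega>. ennreal ((max (Y \<omega>) 0)\<^sup>2) \<partial>M) \<le> ennreal (\<sigma>\<^sup>2/2)" by (rule E)
        show "q = measure M {\<omega>\<in>space M. k \<le> Y \<omega>}" by (simp add: q_def Pge_def)
      qed
    qed
  qed
  define z where "z = \<bar>g\<bar> / (sqrt 3 * \<sigma>)"
  define v where "v = 1 - 2*q"
  have z0: "0 \<le> z" using assms(7) by (simp add: z_def)
  have z2: "z\<^sup>2 = k\<^sup>2 / (3 * \<sigma>\<^sup>2)" by (simp add: z_def k_def power_divide power_mult_distrib)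
  have "z\<^sup>2 * (1 - v^3) \<le> v\<^sup>2"
  proof -
    have "z\<^sup>2 * (1 - v^3) = (k\<^sup>2 * (1 - v^3)) / (3 * \<sigma>\<^sup>2)" by (simp add: z2)
    also have "\<dots> \<le> (3 * \<sigma>\<^sup>2 * v\<^sup>2) / (3 * \<sigma>\<^sup>2)"
      using main assms(7) by (intro divide_right_mono) (auto simp: v_def)
    also have "\<dots> = v\<^sup>2" using assms(7) by simp
    finally show ?thesis .
  qed
  then have fa: "(1 - v) * (1 + z + z\<^sup>2) \<le> 1"
    by (intro final_alg z0) (use q01 in \<open>auto simp: v_def\<close>)
  have pos: "0 < 1 + z + z\<^sup>2" using z0 by (smt (verit) zero_le_power2)
  have "q \<le> 1/2 * (1 / (1 + z + z\<^sup>2))"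
    using fa pos by (simp add: v_def field_simps)
  then show ?thesis using fail by (simp add: z_def)
qed

end
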